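(* Consider an episodic RMDP with $\mathcal{S}\times\mathcal{A}$-rectangular total-variation robust sets of radius $\rho\in[0,1)$ satisfying the vanishing minimal value assumption. Let $\pi$ be any deterministic Markov policy, and define $\widetilde T_h(\cdot|s,a)\in\arg\min_{P\in\mathcal{P}_\rho(s,a;P^\star_h)}\mathbb{E}_{P}[V^\pi_{h+1,P^\star,\boldsymbol{\Phi}}]$ for all $(s,a,h)$, $\widetilde T=\{\widetilde T_h\}_{h=1}^H$. Then $$\mathbb{E}_{(s_h,a_h)\sim(\widetilde T,\pi)}\Big[\sum_{h=1}^H\mathbb{V}_{\widetilde T_h(\cdot|s_h,a_h)}\big[V^\pi_{h+1,P^\star,\boldsymbol{\Phi}}\big]\Big]\le2H\cdot\min\{H,\rho^{-1}\},$$ where the expectation is over trajectories starting from the initial state $s_1$ and generated by $\pi$ under the kernels $\widetilde T$.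
   Context: Episodic RMDP $(\mathcal{S},\mathcal{A},H,P^\star,R,\boldsymbol{\Phi})$: finite $\mathcal{S},\mathcal{A}$, nominal kernels $P^\star_h$, rewards $R_h\in[0,1]$, fixed initial state $s_1$. TV robust set $\boldsymbol{\Phi}(P_h)=\bigotimes_{(s,a)}\mathcal{P}_\rho(s,a;P_h)$, $\mathcal{P}_\rho(s,a;P_h)=\{\widetilde P\in\Delta(\mathcal{S}):\frac12\sum_{s'}|\widetilde P(s')-P_h(s'|s,a)|\le\rho\}$. $V^\pi_{h,P^\star,\boldsymbol{\Phi}}(s)$ is the infimum over all $\widetilde P_i(\cdot|s',a')\in\mathcal{P}_\rho(s',a';P^\star_i)$ of the expected $\sum_{i=h}^HR_i(s_i,a_i)$ under $\pi$ from $s_h=s$; $V_{H+1}\equiv0$; $V^\star=\max_\pi V^\pi$. Vanishing minimal value assumption: $\min_sV^\star_{1,P^\star,\boldsymbol{\Phi}}(s)=0$ and $s_1\notin\arg\min_sV^\star_{1,P^\star,\boldsymbol{\Phi}}(s)$. $\mathbb{V}_p[f]=\mathbb{E}_p[f^2]-(\mathbb{E}_p[f])^2$. $\rho^{-1}=\infty$ if $\rho=0$. *)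

theory Defs
  imports Complex_Main
begin

text \<open>Steps are indexed h = 1..H.  Kernels are functions
  P :: nat \<Rightarrow> 's \<Rightarrow> 'a \<Rightarrow> 's \<Rightarrow> real, P h s a s' = P_h(s'|s,a).\<close>

definition simplex :: "('s::finite \<Rightarrow> real) set" where
  "simplex = {q. (\<forall>s. 0 \<le> q s) \<and> (\<Sum>s\<in>UNIV. q s) = 1}"

definition tv_ball :: "real \<Rightarrow> ('s::finite \<Rightarrow> real) \<Rightarrow> ('s \<Rightarrow> real) set" where
  "tv_ball \<rho> p = {q. q \<in> simplex \<and> (1/2) * (\<Sum>s\<in>UNIV. \<bar>q s - p s\<bar>) \<le> \<rho>}"

text \<open>Expected cumulative reward of policy pol under kernels Pt, from step h
  with n remaining steps (backward recursion = expectation of sum of rewards).\<close>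
fun pol_val_aux :: "(nat \<Rightarrow> 's::finite \<Rightarrow> 'a \<Rightarrow> real) \<Rightarrow> (nat \<Rightarrow> 's \<Rightarrow> 'a \<Rightarrow> 's \<Rightarrow> real)
    \<Rightarrow> (nat \<Rightarrow> 's \<Rightarrow> 'a) \<Rightarrow> nat \<Rightarrow> nat \<Rightarrow> 's \<Rightarrow> real" where
  "pol_val_aux R Pt pol 0 h s = 0"
| "pol_val_aux R Pt pol (Suc n) h s =
     R h s (pol h s) + (\<Sum>s'\<in>UNIV. Pt h s (pol h s) s' * pol_val_aux R Pt pol n (Suc h) s')"

definition pol_val :: "nat \<Rightarrow> (nat \<Rightarrow> 's::finite \<Rightarrow> 'a \<Rightarrow> real) \<Rightarrow> (nat \<Rightarrow> 's \<Rightarrow> 'a \<Rightarrow> 's \<Rightarrow> real)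
    \<Rightarrow> (nat \<Rightarrow> 's \<Rightarrow> 'a) \<Rightarrow> nat \<Rightarrow> 's \<Rightarrow> real" where
  "pol_val H R Pt pol h s = pol_val_aux R Pt pol (Suc H - h) h s"

text \<open>Admissible adversarial kernels: Pt_i(.|s,a) in the TV ball around P_i(.|s,a)
  for every step i and every (s,a)  (S x A-rectangular set Phi).\<close>
definition adm_kernels :: "nat \<Rightarrow> real \<Rightarrow> (nat \<Rightarrow> 's::finite \<Rightarrow> 'a \<Rightarrow> 's \<Rightarrow> real)
    \<Rightarrow> (nat \<Rightarrow> 's \<Rightarrow> 'a \<Rightarrow> 's \<Rightarrow> real) set" where
  "adm_kernels H \<rho> P = {Pt. \<forall>i\<in>{1..H}. \<forall>s a. Pt i s a \<in> tv_ball \<rho> (P i s a)}"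

definition rob_val :: "nat \<Rightarrow> real \<Rightarrow> (nat \<Rightarrow> 's::finite \<Rightarrow> 'a \<Rightarrow> real) \<Rightarrow> (nat \<Rightarrow> 's \<Rightarrow> 'a \<Rightarrow> 's \<Rightarrow> real)
    \<Rightarrow> (nat \<Rightarrow> 's \<Rightarrow> 'a) \<Rightarrow> nat \<Rightarrow> 's \<Rightarrow> real" where
  "rob_val H \<rho> R P pol h s = (INF Pt\<in>adm_kernels H \<rho> P. pol_val H R Pt pol h s)"

definition opt_rob_val :: "nat \<Rightarrow> real \<Rightarrow> (nat \<Rightarrow> 's::finite \<Rightarrow> 'a::finite \<Rightarrow> real)
    \<Rightarrow> (nat \<Rightarrow> 's \<Rightarrow> 'a \<Rightarrow> 's \<Rightarrow> real) \<Rightarrow> nat \<Rightarrow> 's \<Rightarrow> real" where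
  "opt_rob_val H \<rho> R P h s = (SUP pol. rob_val H \<rho> R P pol h s)"

definition var_p :: "('s::finite \<Rightarrow> real) \<Rightarrow> ('s \<Rightarrow> real) \<Rightarrow> real" where
  "var_p p f = (\<Sum>s\<in>UNIV. p s * (f s)^2) - (\<Sum>s\<in>UNIV. p s * f s)^2"

text \<open>State-occupancy distribution under (T, pol) from s1:
  occ T pol s1 k s = Pr(s_{k+1} = s).\<close>
fun occ :: "(nat \<Rightarrow> 's::finite \<Rightarrow> 'a \<Rightarrow> 's \<Rightarrow> real) \<Rightarrow> (nat \<Rightarrow> 's \<Rightarrow> 'a) \<Rightarrow> 's \<Rightarrow> nat \<Rightarrow> 's \<Rightarrow> real" where
  "occ T pol s1 0 s = (if s = s1 then 1 else 0)"
| "occ T pol s1 (Suc k) s' = (\<Sum>s\<in>UNIV. occ T pol s1 k s * T (Suc k) s (pol (Suc k) s) s')"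

text \<open>min{H, rho^{-1}} with rho^{-1} = infinity for rho = 0.\<close>
definition min_H_inv :: "nat \<Rightarrow> real \<Rightarrow> real" where
  "min_H_inv H \<rho> = (if \<rho> = 0 then real H else min (real H) (1 / \<rho>))"

end

theory Submission
  imports Defs
begin

lemma expect_bounds:
  fixes q f :: "'s::finite \<Rightarrow> real"
  assumes "q \<in> simplex" "\<forall>s. a \<le> f s \<and> f s \<le> b"
  shows "a \<le> (\<Sum>s\<in>UNIV. q s * f s) \<and> (\<Sum>s\<in>UNIV. q s * f s) \<le> b"
proof -
  have q: "\<forall>s. 0 \<le> q s" "sum q UNIV = 1" using assms(1) by (auto simp: simplex_def)
  have "(\<Sum>s\<in>UNIV. q s * f s) \<le> (\<Sum>s\<in>UNIV. q s * b)"
    by (rule sum_mono) (simp add: q(1) assms(2) mult_left_mono)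
  also have "\<dots> = b" using q(2) by (simp add: sum_distrib_right[symmetric])
  finally have 1: "(\<Sum>s\<in>UNIV. q s * f s) \<le> b" .
  have "a = (\<Sum>s\<in>UNIV. q s * a)" using q(2) by (simp add: sum_distrib_right[symmetric])
  also have "\<dots> \<le> (\<Sum>s\<in>UNIV. q s * f s)"
    by (rule sum_mono) (simp add: q(1) assms(2) mult_left_mono)
  finally show ?thesis using 1 by simp
qed

lemma aux_bounds:
  assumes "\<forall>i. h \<le> i \<and> i < h + n \<longrightarrow> (\<forall>s a. Pt i s a \<in> simplex \<and> 0 \<le> R i s a \<and> R i s a \<le> 1)"
  shows "0 \<le> pol_val_aux R Pt pol n h s \<and> pol_val_aux R Pt pol n h s \<le> real n"
  using assms
proof (induction n arbitrary: h s)
  case 0 then show ?case by simp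
next
  case (Suc n)
  have pr: "\<forall>i. Suc h \<le> i \<and> i < Suc h + n \<longrightarrow> (\<forall>s a. Pt i s a \<in> simplex \<and> 0 \<le> R i s a \<and> R i s a \<le> 1)"
    using Suc.prems by auto
  have IH: "\<forall>s. 0 \<le> pol_val_aux R Pt pol n (Suc h) s \<and> pol_val_aux R Pt pol n (Suc h) s \<le> real n"
    using Suc.IH[OF pr] by blast
  have h: "Pt h s (pol h s) \<in> simplex" "0 \<le> R h s (pol h s)" "R h s (pol h s) \<le> 1" using Suc.prems by auto
  from expect_bounds[OF h(1) IH] h(2,3) show ?case by simp
qed

lemma pol_val_bounds:
  assumes "\<forall>i\<in>{1..H}. \<forall>s a. Pt i s a \<in> simplex" "\<forall>i\<in>{1..H}. \<forall>s a. 0 \<le> R i s a \<and> R i s a \<le> 1" "1 \<le> h"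
  shows "0 \<le> pol_val H R Pt pol h s \<and> pol_val H R Pt pol h s \<le> real (Suc H - h)"
  unfolding pol_val_def by (rule aux_bounds) (use assms in auto)

lemma pol_val_step: "h \<le> H \<Longrightarrow> pol_val H R Pt pol h s =
   R h s (pol h s) + (\<Sum>s'\<in>UNIV. Pt h s (pol h s) s' * pol_val H R Pt pol (Suc h) s')"
  unfolding pol_val_def by (simp add: Suc_diff_le)

lemma pol_val_end: "pol_val H R Pt pol (Suc H) s = 0" by (simp add: pol_val_def)

lemma adm_P:
  assumes "\<forall>h\<in>{1..H}. \<forall>s a. P h s a \<in> simplex" "0 \<le> \<rho>"
  shows "P \<in> adm_kernels H \<rho> P"
  using assms by (auto simp: adm_kernels_def tv_ball_def)

lemma adm_simplex: "Pt \<in> adm_kernels H \<rho> P \<Longrightarrow> \<forall>i\<in>{1..H}. \<forall>s a. Pt i s a \<in> simplex"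
  by (auto simp: adm_kernels_def tv_ball_def)

lemma rob_val_le:
  assumes "\<forall>i\<in>{1..H}. \<forall>s a. 0 \<le> R i s a \<and> R i s a \<le> 1" "1 \<le> h" "Pt \<in> adm_kernels H \<rho> P"
  shows "rob_val H \<rho> R P pol h s \<le> pol_val H R Pt pol h s"
  unfolding rob_val_def
proof (rule cINF_lower[OF _ assms(3)])
  show "bdd_below ((\<lambda>Pt. pol_val H R Pt pol h s) ` adm_kernels H \<rho> P)"
    by (rule bdd_belowI2[where m=0]) (use pol_val_bounds[OF adm_simplex assms(1,2)] in blast)
qed

lemma rob_val_ge:
  assumes "\<forall>h\<in>{1..H}. \<forall>s a. P h s a \<in> simplex" "0 \<le> \<rho>"
    "\<And>Pt. Pt \<in> adm_kernels H \<rho> P \<Longrightarrow> c \<le> pol_val H R Pt pol h s"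
  shows "c \<le> rob_val H \<rho> R P pol h s"
  unfolding rob_val_def
  by (rule cINF_greatest) (use adm_P[OF assms(1,2)] assms(3) in auto)

lemma rob_val_bounds:
  assumes "\<forall>h\<in>{1..H}. \<forall>s a. P h s a \<in> simplex" "0 \<le> \<rho>"
    "\<forall>i\<in>{1..H}. \<forall>s a. 0 \<le> R i s a \<and> R i s a \<le> 1" "1 \<le> h"
  shows "0 \<le> rob_val H \<rho> R P pol h s \<and> rob_val H \<rho> R P pol h s \<le> real (Suc H - h)"
proof
  show "0 \<le> rob_val H \<rho> R P pol h s"
    by (rule rob_val_ge[OF assms(1,2)]) (use pol_val_bounds[OF adm_simplex assms(3,4)] in blast)
  have "rob_val H \<rho> R P pol h s \<le> pol_val H R P pol h s"
    by (rule rob_val_le[OF assms(3,4) adm_P[OF assms(1,2)]])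
  also have "\<dots> \<le> real (Suc H - h)" using pol_val_bounds[OF assms(1,3,4)] by blast
  finally show "rob_val H \<rho> R P pol h s \<le> real (Suc H - h)" .
qed

theorem lemma8:
  fixes H :: nat and \<rho> :: real
    and P :: "nat \<Rightarrow> 's::finite \<Rightarrow> 'a::finite \<Rightarrow> 's \<Rightarrow> real"
    and R :: "nat \<Rightarrow> 's \<Rightarrow> 'a \<Rightarrow> real"
    and s1 :: 's
    and pol :: "nat \<Rightarrow> 's \<Rightarrow> 'a"
    and T :: "nat \<Rightarrow> 's \<Rightarrow> 'a \<Rightarrow> 's \<Rightarrow> real"
  assumes rho: "0 \<le> \<rho>" "\<rho> < 1"
    and P_dist: "\<forall>h\<in>{1..H}. \<forall>s a. P h s a \<in> simplex"
    and R_bnd: "\<forall>h\<in>{1..H}. \<forall>s a. 0 \<le> R h s a \<and> R h s a \<le> 1"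
    and vanish: "(MIN s. opt_rob_val H \<rho> R P 1 s) = 0"
      "opt_rob_val H \<rho> R P 1 s1 \<noteq> (MIN s. opt_rob_val H \<rho> R P 1 s)"
    and T_argmin: "\<forall>h\<in>{1..H}. \<forall>s a. T h s a \<in> tv_ball \<rho> (P h s a) \<and>
         (\<forall>q\<in>tv_ball \<rho> (P h s a).
            (\<Sum>s'\<in>UNIV. T h s a s' * rob_val H \<rho> R P pol (Suc h) s')
              \<le> (\<Sum>s'\<in>UNIV. q s' * rob_val H \<rho> R P pol (Suc h) s'))"
  shows "(\<Sum>h=1..H. \<Sum>s\<in>UNIV. occ T pol s1 (h - 1) s *
            var_p (T h s (pol h s)) (rob_val H \<rho> R P pol (Suc h)))
         \<le> 2 * real H * min_H_inv H \<rho>"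
proof -
  define V where "V = rob_val H \<rho> R P pol"
  have Vb: "\<And>h s. 1 \<le> h \<Longrightarrow> 0 \<le> V h s \<and> V h s \<le> real (Suc H - h)"
    unfolding V_def by (rule rob_val_bounds[OF P_dist rho(1) R_bnd])
  have Tadm: "T \<in> adm_kernels H \<rho> P" using T_argmin by (auto simp: adm_kernels_def)
  have Tsim: "\<forall>i\<in>{1..H}. \<forall>s a. T i s a \<in> simplex" using adm_simplex[OF Tadm] .
  have Tnn: "\<And>i s a s'. i \<in> {1..H} \<Longrightarrow> 0 \<le> T i s a s'" using Tsim by (auto simp: simplex_def)
  have Tsum: "\<And>i s a. i \<in> {1..H} \<Longrightarrow> sum (T i s a) UNIV = 1" using Tsim by (auto simp: simplex_def)
  have Vend: "\<And>s. V (Suc H) s = 0" using Vb[of "Suc H"] by (simp add: order_antisym)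
  have A0: "\<forall>h s. 1 \<le> h \<longrightarrow> h \<le> Suc H \<longrightarrow> Suc H - h = k \<longrightarrow> V h s = pol_val H R T pol h s" for k
  proof (induction k)
    case 0
    show ?case using Vend pol_val_end by (metis Suc_leI diff_is_0_eq le_antisym)
  next
    case (Suc k)
    show ?case
    proof (intro allI impI)
      fix h s assume h: "1 \<le> h" "h \<le> Suc H" "Suc H - h = Suc k"
      then have hH: "h \<le> H" "h \<in> {1..H}" by auto
      have IH: "\<And>s. V (Suc h) s = pol_val H R T pol (Suc h) s"
        using Suc.IH h by auto
      have eq: "pol_val H R T pol h s = R h s (pol h s) + (\<Sum>s'\<in>UNIV. T h s (pol h s) s' * V (Suc h) s')"
        using pol_val_step[OF hH(1)] IH by simp
      have "V h s \<le> pol_val H R T pol h s"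
        unfolding V_def by (rule rob_val_le[OF R_bnd h(1) Tadm])
      moreover have "pol_val H R T pol h s \<le> V h s"
        unfolding V_def
      proof (rule rob_val_ge[OF P_dist rho(1)])
        fix Pt assume Pt: "Pt \<in> adm_kernels H \<rho> P"
        have ball: "Pt h s (pol h s) \<in> tv_ball \<rho> (P h s (pol h s))"
          using Pt hH by (auto simp: adm_kernels_def)
        have Ptnn: "\<And>s'. 0 \<le> Pt h s (pol h s) s'" using ball by (auto simp: tv_ball_def simplex_def)
        have "(\<Sum>s'\<in>UNIV. T h s (pol h s) s' * V (Suc h) s')
              \<le> (\<Sum>s'\<in>UNIV. Pt h s (pol h s) s' * V (Suc h) s')"
          using T_argmin hH ball unfolding V_def by blast
        also have "\<dots> \<le> (\<Sum>s'\<in>UNIV. Pt h s (pol h s) s' * pol_val H R Pt pol (Suc h) s')"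
        proof (rule sum_mono)
          fix s' show "Pt h s (pol h s) s' * V (Suc h) s' \<le> Pt h s (pol h s) s' * pol_val H R Pt pol (Suc h) s'"
            using rob_val_le[OF R_bnd _ Pt, of "Suc h" pol s'] Ptnn unfolding V_def
            by (simp add: mult_left_mono)
        qed
        finally show "pol_val H R T pol h s \<le> pol_val H R Pt pol h s"
          using eq pol_val_step[OF hH(1), of R Pt pol s] by simp
      qed
      ultimately show "V h s = pol_val H R T pol h s" by simp
    qed
  qed
  have A: "\<And>h s. 1 \<le> h \<Longrightarrow> h \<le> Suc H \<Longrightarrow> V h s = pol_val H R T pol h s"
    using A0 by blast
  have B: "V h s = R h s (pol h s) + (\<Sum>s'\<in>UNIV. T h s (pol h s) s' * V (Suc h) s')"
    if h: "h \<in> {1..H}" for h s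
  proof -
    have h1: "1 \<le> h" "h \<le> H" "1 \<le> Suc h" "Suc h \<le> Suc H" using h by auto
    have "V h s = pol_val H R T pol h s" using A h1 by auto
    also have "\<dots> = R h s (pol h s) + (\<Sum>s'\<in>UNIV. T h s (pol h s) s' * pol_val H R T pol (Suc h) s')"
      using h1 by (simp add: pol_val_step)
    also have "\<dots> = R h s (pol h s) + (\<Sum>s'\<in>UNIV. T h s (pol h s) s' * V (Suc h) s')"
      using A[OF h1(3,4)] by simp
    finally show ?thesis .
  qed
  obtain s0 where s0: "opt_rob_val H \<rho> R P 1 s0 = 0"
  proof -
    have "Min (range (\<lambda>s. opt_rob_val H \<rho> R P 1 s)) \<in> range (\<lambda>s. opt_rob_val H \<rho> R P 1 s)"
      by (rule Min_in) auto
    then obtain x where "Min (range (\<lambda>s. opt_rob_val H \<rho> R P 1 s)) = opt_rob_val H \<rho> R P 1 x"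
      by blast
    then show ?thesis using vanish(1) that by metis
  qed
  have V1s0: "V 1 s0 = 0"
  proof -
    have "V 1 s0 \<le> opt_rob_val H \<rho> R P 1 s0"
      unfolding V_def opt_rob_val_def
    proof (rule cSUP_upper)
      show "bdd_above (range (\<lambda>pol. rob_val H \<rho> R P pol 1 s0))"
        by (rule bdd_aboveI2[where M="real H"])
           (use rob_val_bounds[OF P_dist rho(1) R_bnd, of 1] in force)
    qed simp
    then show ?thesis using s0 Vb[of 1 s0] by simp
  qed
  have Z: "1 \<le> h \<longrightarrow> h \<le> Suc H \<longrightarrow> (\<exists>z. V h z = 0)" for h
  proof (induction h)
    case 0 then show ?case by simp
  next
    case (Suc h)
    show ?case
    proof (cases "h = 0")
      case True then show ?thesis using V1s0 by auto
    next
      case False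
      show ?thesis
      proof (intro impI)
        assume "Suc h \<le> Suc H"
        then have hH: "h \<in> {1..H}" using False by auto
        then obtain z where z: "V h z = 0" using Suc.IH by auto
        let ?q = "T h z (pol h z)"
        have nn: "\<And>s'. 0 \<le> ?q s' * V (Suc h) s'"
          using Tnn[OF hH] Vb[of "Suc h"] by simp
        have r: "0 \<le> R h z (pol h z)" using R_bnd hH by auto
        have sn: "0 \<le> (\<Sum>s'\<in>UNIV. ?q s' * V (Suc h) s')" using nn by (simp add: sum_nonneg)
        have "(\<Sum>s'\<in>UNIV. ?q s' * V (Suc h) s') = 0"
          using B[OF hH, of z] z r sn by linarith
        then have all0: "\<forall>s'. ?q s' * V (Suc h) s' = 0"
          using sum_nonneg_eq_0_iff[of UNIV "\<lambda>s'. ?q s' * V (Suc h) s'"] nn by simp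
        obtain s' where "?q s' \<noteq> 0"
          using Tsum[OF hH, of z "pol h z"] by (metis (mono_tags) sum.neutral zero_neq_one)
        then show "\<exists>z. V (Suc h) z = 0" using all0 by auto
      qed
    qed
  qed
  have C0: "\<forall>h s. 1 \<le> h \<longrightarrow> h \<le> Suc H \<longrightarrow> Suc H - h = k \<longrightarrow> V h s \<le> 1 / \<rho>"
    if rpos: "0 < \<rho>" for k
  proof (induction k)
    case 0
    show ?case using Vend rpos by (metis Suc_leI diff_is_0_eq le_antisym less_eq_real_def zero_less_divide_1_iff)
  next
    case (Suc k)
    show ?case
    proof (intro allI impI)
      fix h s assume h: "1 \<le> h" "h \<le> Suc H" "Suc H - h = Suc k"
      then have hH: "h \<le> H" "h \<in> {1..H}" by auto
      have IH: "\<And>s. V (Suc h) s \<le> 1 / \<rho>" using Suc.IH h by auto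
      obtain z where z: "V (Suc h) z = 0" using Z[of "Suc h"] hH by auto
      define p where "p = P h s (pol h s)"
      define q where "q = (\<lambda>s'. (1 - \<rho>) * p s' + (if s' = z then \<rho> else 0))"
      have psim: "p \<in> simplex" using P_dist hH unfolding p_def by auto
      then have pnn: "\<And>s'. 0 \<le> p s'" and psum: "sum p UNIV = 1" by (auto simp: simplex_def)
      have qnn: "\<And>s'. 0 \<le> q s'" unfolding q_def using pnn rho rpos by auto
      have qsum: "sum q UNIV = 1"
        unfolding q_def by (simp add: sum.distrib sum_distrib_left[symmetric] psum)
      have absb: "\<bar>q s' - p s'\<bar> \<le> \<rho> * ((if s' = z then 1 else 0) + p s')" for s'
      proof -
        have "q s' - p s' = \<rho> * ((if s' = z then 1 else 0) - p s')" unfolding q_def by (simp add: algebra_simps)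
        then have "\<bar>q s' - p s'\<bar> = \<rho> * \<bar>(if s' = z then 1 else 0) - p s'\<bar>" using rpos by (simp add: abs_mult)
        also have "\<dots> \<le> \<rho> * ((if s' = z then 1 else 0) + p s')"
          using rpos pnn[of s'] by (intro mult_left_mono) auto
        finally show ?thesis .
      qed
      have "(\<Sum>s'\<in>UNIV. \<bar>q s' - p s'\<bar>) \<le> (\<Sum>s'\<in>UNIV. \<rho> * ((if s' = z then 1 else 0) + p s'))"
        by (rule sum_mono) (rule absb)
      also have "\<dots> = 2 * \<rho>" by (simp add: sum.distrib sum_distrib_left[symmetric] psum)
      finally have "q \<in> tv_ball \<rho> p" using qnn qsum by (auto simp: tv_ball_def simplex_def)
      then have le1: "(\<Sum>s'\<in>UNIV. T h s (pol h s) s' * V (Suc h) s') \<le> (\<Sum>s'\<in>UNIV. q s' * V (Suc h) s')"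
        using T_argmin hH unfolding V_def p_def by blast
      have "(\<Sum>s'\<in>UNIV. q s' * V (Suc h) s') = (1 - \<rho>) * (\<Sum>s'\<in>UNIV. p s' * V (Suc h) s')"
      proof -
        have "\<And>s'. q s' * V (Suc h) s' = (1 - \<rho>) * (p s' * V (Suc h) s')"
          unfolding q_def using z by (auto simp: algebra_simps)
        then have "(\<Sum>s'\<in>UNIV. q s' * V (Suc h) s') = (\<Sum>s'\<in>UNIV. (1 - \<rho>) * (p s' * V (Suc h) s'))"
          by (intro sum.cong) auto
        then show ?thesis by (simp only: sum_distrib_left)
      qed
      also have "\<dots> \<le> (1 - \<rho>) * (1 / \<rho>)"
      proof (rule mult_left_mono)
        show "(\<Sum>s'\<in>UNIV. p s' * V (Suc h) s') \<le> 1 / \<rho>"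
          using expect_bounds[OF psim, of 0 "V (Suc h)" "1/\<rho>"] IH Vb[of "Suc h"] by auto
      qed (use rho in auto)
      finally have le2: "(\<Sum>s'\<in>UNIV. T h s (pol h s) s' * V (Suc h) s') \<le> (1 - \<rho>) * (1 / \<rho>)"
        using le1 by linarith
      have r: "R h s (pol h s) \<le> 1" using R_bnd hH by auto
      have "V h s \<le> 1 + (1 - \<rho>) * (1 / \<rho>)" using B[OF hH(2), of s] le2 r by linarith
      also have "\<dots> = 1 / \<rho>" using rpos by (simp add: field_simps)
      finally show "V h s \<le> 1 / \<rho>" .
    qed
  qed
  define M where "M = min_H_inv H \<rho>"
  have M0: "0 \<le> M" unfolding M_def min_H_inv_def using rho by auto
  have VM: "V h s \<le> M" if hH: "h \<in> {1..H}" for h s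
  proof -
    have "V h s \<le> real H" using Vb[of h s] hH by auto
    moreover have "V h s \<le> 1 / \<rho>" if "0 < \<rho>" using C0[OF that] hH by auto
    ultimately show ?thesis unfolding M_def min_H_inv_def using rho(1) by auto
  qed
  have occ_nn: "k \<le> H \<longrightarrow> (\<forall>s. 0 \<le> occ T pol s1 k s)" for k
  proof (induction k)
    case 0 then show ?case by simp
  next
    case (Suc k)
    show ?case
    proof (intro impI allI)
      fix s assume k: "Suc k \<le> H"
      then have "Suc k \<in> {1..H}" by auto
      then show "0 \<le> occ T pol s1 (Suc k) s" using Suc.IH k Tnn
        by (auto intro!: sum_nonneg mult_nonneg_nonneg)
    qed
  qed
  have occ_sum: "k < H \<longrightarrow> sum (occ T pol s1 k) UNIV = 1" for k
  proof (induction k)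
    case 0 then show ?case by simp
  next
    case (Suc k)
    show ?case
    proof (intro impI)
      assume k: "Suc k < H"
      then have kk: "Suc k \<in> {1..H}" by auto
      have "sum (occ T pol s1 (Suc k)) UNIV
          = (\<Sum>s'\<in>UNIV. \<Sum>s\<in>UNIV. occ T pol s1 k s * T (Suc k) s (pol (Suc k) s) s')"
        by simp
      also have "\<dots> = (\<Sum>s\<in>UNIV. \<Sum>s'\<in>UNIV. occ T pol s1 k s * T (Suc k) s (pol (Suc k) s) s')"
        by (rule sum.swap)
      also have "\<dots> = (\<Sum>s\<in>UNIV. occ T pol s1 k s * (\<Sum>s'\<in>UNIV. T (Suc k) s (pol (Suc k) s) s'))"
        by (simp only: sum_distrib_left)
      also have "\<dots> = 1" using Tsum[OF kk] Suc.IH k by simp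
      finally show "sum (occ T pol s1 (Suc k)) UNIV = 1" .
    qed
  qed
  define a where "a h = (\<Sum>s\<in>UNIV. occ T pol s1 (h - 1) s * (V h s)^2)" for h
  have step: "(\<Sum>s\<in>UNIV. occ T pol s1 (h - 1) s * var_p (T h s (pol h s)) (V (Suc h)))
      \<le> a (Suc h) - a h + 2 * M" if hH: "h \<in> {1..H}" for h
  proof -
    let ?mu = "occ T pol s1 (h - 1)"
    have munn: "\<And>s. 0 \<le> ?mu s" using occ_nn hH by auto
    have musum: "sum ?mu UNIV = 1" using occ_sum hH by auto
    have vs: "var_p (T h s (pol h s)) (V (Suc h))
       \<le> (\<Sum>s'\<in>UNIV. T h s (pol h s) s' * (V (Suc h) s')^2) - (V h s)^2 + 2 * M" for s
    proof -
      let ?r = "R h s (pol h s)"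
      have e: "(\<Sum>s'\<in>UNIV. T h s (pol h s) s' * V (Suc h) s') = V h s - ?r" using B[OF hH, of s] by simp
      have r: "0 \<le> ?r" "?r \<le> 1" using R_bnd hH by auto
      have v: "0 \<le> V h s" "V h s \<le> M" using Vb[of h s] VM[OF hH, of s] hH by auto
      have "?r * V h s \<le> 1 * V h s" using r v by (intro mult_right_mono) auto
      moreover have "(V h s - ?r)^2 = (V h s)^2 - 2 * (?r * V h s) + ?r^2"
        by (simp add: power2_eq_square algebra_simps)
      moreover have "0 \<le> ?r^2" by simp
      ultimately have "(V h s)^2 - 2 * M \<le> (V h s - ?r)^2" using v by linarith
      then show ?thesis unfolding var_p_def e by linarith
    qed
    have "(\<Sum>s\<in>UNIV. ?mu s * var_p (T h s (pol h s)) (V (Suc h)))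
        \<le> (\<Sum>s\<in>UNIV. ?mu s * ((\<Sum>s'\<in>UNIV. T h s (pol h s) s' * (V (Suc h) s')^2) - (V h s)^2 + 2 * M))"
      by (rule sum_mono) (use vs munn in \<open>simp add: mult_left_mono\<close>)
    also have "\<dots> = (\<Sum>s\<in>UNIV. \<Sum>s'\<in>UNIV. ?mu s * T h s (pol h s) s' * (V (Suc h) s')^2)
         - a h + 2 * M * sum ?mu UNIV"
    proof -
      have pt: "?mu s * ((\<Sum>s'\<in>UNIV. T h s (pol h s) s' * (V (Suc h) s')^2) - (V h s)^2 + 2 * M)
         = (\<Sum>s'\<in>UNIV. ?mu s * T h s (pol h s) s' * (V (Suc h) s')^2) - ?mu s * (V h s)^2 + 2 * M * ?mu s" for s
      proof -
        have pt1: "?mu s * (\<Sum>s'\<in>UNIV. T h s (pol h s) s' * (V (Suc h) s')^2)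
          = (\<Sum>s'\<in>UNIV. ?mu s * T h s (pol h s) s' * (V (Suc h) s')^2)"
          by (simp add: sum_distrib_left mult.assoc)
        show ?thesis unfolding pt1[symmetric] by (simp add: algebra_simps)
      qed
      show ?thesis unfolding a_def
        by (simp only: pt sum.distrib sum_subtractf sum_distrib_left)
    qed
    also have "(\<Sum>s\<in>UNIV. \<Sum>s'\<in>UNIV. ?mu s * T h s (pol h s) s' * (V (Suc h) s')^2) = a (Suc h)"
    proof -
      have hs: "h = Suc (h - 1)" using hH by auto
      have "occ T pol s1 h = (\<lambda>s'. \<Sum>s\<in>UNIV. ?mu s * T h s (pol h s) s')"
      proof -
        obtain j where j: "h = Suc j" using hH by (cases h) auto
        show ?thesis unfolding j by (rule ext) simp
      qed
      have "(\<Sum>s\<in>UNIV. \<Sum>s'\<in>UNIV. ?mu s * T h s (pol h s) s' * (V (Suc h) s')^2)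
          = (\<Sum>s'\<in>UNIV. \<Sum>s\<in>UNIV. ?mu s * T h s (pol h s) s' * (V (Suc h) s')^2)"
        by (rule sum.swap)
      also have "\<dots> = (\<Sum>s'\<in>UNIV. occ T pol s1 h s' * (V (Suc h) s')^2)"
        unfolding \<open>occ T pol s1 h = _\<close> by (simp only: sum_distrib_right)
      finally show ?thesis unfolding a_def by simp
    qed
    finally show ?thesis using musum by simp
  qed
  have "(\<Sum>h=1..H. \<Sum>s\<in>UNIV. occ T pol s1 (h - 1) s * var_p (T h s (pol h s)) (V (Suc h)))
      \<le> (\<Sum>h=1..H. a (Suc h) - a h + 2 * M)"
    by (rule sum_mono) (rule step, simp)
  also have "\<dots> = (\<Sum>h=1..H. a (Suc h) - a h) + 2 * M * real H"
    by (simp add: sum.distrib)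
  also have "(\<Sum>h=1..H. a (Suc h) - a h) = a (Suc H) - a 1"
    by (rule sum_Suc_diff) simp
  also have "a (Suc H) = 0" unfolding a_def by (simp add: Vend)
  also have "0 \<le> a 1" unfolding a_def using occ_nn[of 0] by (simp add: sum_nonneg)
  then have "0 - a 1 + 2 * M * real H \<le> 2 * real H * M" by simp
  finally show ?thesis unfolding V_def M_def .
qed
end
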